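(* Let $K$ be a field of characteristic $0$, $r\ge1$ an integer, $d$ the derivation of $K[a]$ with $d(a)=a^r$, and let $A=K[a][b;d]$ be the Ore extension, so $pb=bp+d(p)$ for $p\in K[a]$ (in particular $ab=ba+a^r$). Let $w=a$, which is normal, with associated automorphism $\sigma$ ($wy=\sigma(y)w$ for all $y\in A$) given by $\sigma(a)=a$, $\sigma(b)=b+a^{r-1}$. Let $J=A(a-1)$ and $x=b-1$, and $N=A/Ax$. Then: (a) $J$ is a maximal left ideal of $A$, and for every $m\ge 0$ there is no $c\in A$ with $\sigma^m(x)c-1\in J$; (b) $N$ is not artinian, and its nonzero submodules are exactly the modules $a^mN$, $m\ge0$, which form a strictly descending chain $N\supsetneq aN\supsetneq a^2N\supsetneq\cdots$; (c) the submodules $a^mN$ ($m\ge 0$) of $N$ are pairwise non-isomorphic. *)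

theory Defs
  imports "HOL-Computational_Algebra.Polynomial"
begin

text \<open>An element of A is represented in the normal form  sum_i b^i p_i(a)  (b-powers on the
  left, coefficients from K[a] on the right), encoded as a polynomial in b whose i-th
  coefficient is p_i :: 'k poly.  The defining relation is  p b = b p + d(p), whence
  p b^j = sum_k (j choose k) b^(j-k) d^k(p).\<close>

definition dA :: "nat \<Rightarrow> 'k::field_char_0 poly \<Rightarrow> 'k poly" where
  "dA r p = [:0, 1:] ^ r * pderiv p"

definition omult :: "nat \<Rightarrow> 'k::field_char_0 poly poly \<Rightarrow> 'k poly poly \<Rightarrow> 'k poly poly" where
  "omult r P Q = (\<Sum>i\<le>degree P. \<Sum>j\<le>degree Q. \<Sum>k\<le>j.
      monom (smult (of_nat (j choose k)) ((dA r ^^ k) (coeff P i) * coeff Q j)) (i + j - k))"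

definition ga :: "'k::field_char_0 poly poly" where
  "ga = [:[:0, 1:]:]"

definition gb :: "'k::field_char_0 poly poly" where
  "gb = [:0, 1:]"

definition opow :: "nat \<Rightarrow> 'k::field_char_0 poly poly \<Rightarrow> nat \<Rightarrow> 'k poly poly" where
  "opow r y m = (omult r y ^^ m) 1"

definition left_ideal :: "nat \<Rightarrow> 'k::field_char_0 poly poly set \<Rightarrow> bool" where
  "left_ideal r I \<longleftrightarrow> 0 \<in> I \<and> (\<forall>u\<in>I. \<forall>v\<in>I. u + v \<in> I) \<and> (\<forall>u\<in>I. - u \<in> I)
      \<and> (\<forall>c. \<forall>u\<in>I. omult r c u \<in> I)"

definition maximal_left_ideal :: "nat \<Rightarrow> 'k::field_char_0 poly poly set \<Rightarrow> bool" where
  "maximal_left_ideal r I \<longleftrightarrow> left_ideal r I \<and> I \<noteq> UNIV \<and>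
      (\<forall>L. left_ideal r L \<and> I \<subseteq> L \<longrightarrow> L = I \<or> L = UNIV)"

definition lprinc :: "nat \<Rightarrow> 'k::field_char_0 poly poly \<Rightarrow> 'k poly poly set" where
  "lprinc r y = {omult r c y | c. True}"

definition sigma :: "nat \<Rightarrow> 'k::field_char_0 poly poly \<Rightarrow> 'k poly poly" where
  "sigma r y = (THE z. omult r ga y = omult r z ga)"

definition qcoset :: "'k::field_char_0 poly poly set \<Rightarrow> 'k poly poly \<Rightarrow> 'k poly poly set" where
  "qcoset L u = {u + y | y. y \<in> L}"

definition qcarrier :: "'k::field_char_0 poly poly set \<Rightarrow> 'k poly poly set set" where
  "qcarrier L = range (qcoset L)"

definition qadd :: "'k::field_char_0 poly poly set \<Rightarrow> 'k poly poly set \<Rightarrow> 'k poly poly set" where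
  "qadd X Y = {u + v | u v. u \<in> X \<and> v \<in> Y}"

definition qsmult :: "nat \<Rightarrow> 'k::field_char_0 poly poly set \<Rightarrow> 'k poly poly \<Rightarrow> 'k poly poly set
    \<Rightarrow> 'k poly poly set" where
  "qsmult r L c X = {omult r c u + y | u y. u \<in> X \<and> y \<in> L}"

definition qsubmodule :: "nat \<Rightarrow> 'k::field_char_0 poly poly set \<Rightarrow> 'k poly poly set set \<Rightarrow> bool" where
  "qsubmodule r L S \<longleftrightarrow> S \<subseteq> qcarrier L \<and> qcoset L 0 \<in> S \<and>
     (\<forall>X\<in>S. \<forall>Y\<in>S. qadd X Y \<in> S) \<and> (\<forall>c. \<forall>X\<in>S. qsmult r L c X \<in> S)"

definition qartinian :: "nat \<Rightarrow> 'k::field_char_0 poly poly set \<Rightarrow> bool" where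
  "qartinian r L \<longleftrightarrow> (\<forall>S :: nat \<Rightarrow> 'k poly poly set set.
      (\<forall>n. qsubmodule r L (S n)) \<and> (\<forall>n. S (Suc n) \<subseteq> S n) \<longrightarrow> (\<exists>k. \<forall>n\<ge>k. S n = S k))"

definition qiso :: "nat \<Rightarrow> 'k::field_char_0 poly poly set \<Rightarrow> 'k poly poly set set
    \<Rightarrow> 'k poly poly set set \<Rightarrow> bool" where
  "qiso r L S T \<longleftrightarrow> (\<exists>f. bij_betw f S T \<and>
      (\<forall>X\<in>S. \<forall>Y\<in>S. f (qadd X Y) = qadd (f X) (f Y)) \<and>
      (\<forall>c. \<forall>X\<in>S. f (qsmult r L c X) = qsmult r L c (f X)))"

end

theory Submission
  imports Defs
begin

lemma dA_add: "dA r (x + y) = dA r x + dA r y"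
  by (simp add: dA_def pderiv_add distrib_left)
lemma dA_0[simp]: "dA r 0 = 0" by (simp add: dA_def)
lemma dA_minus: "dA r (- x) = - dA r x" by (simp add: dA_def pderiv_minus)
lemma dA_diff: "dA r (x - y) = dA r x - dA r y" by (simp add: dA_def pderiv_diff right_diff_distrib)
lemma dA_smult: "dA r (smult c x) = smult c (dA r x)" by (simp add: dA_def pderiv_smult)
lemma dA_mult: "dA r (x * y) = dA r x * y + x * dA r y"
  by (simp add: dA_def pderiv_mult algebra_simps)

lemma Dn_add: "(dA r ^^ k) (x + y) = (dA r ^^ k) x + (dA r ^^ k) y"
  by (induction k) (auto simp: dA_add)
lemma Dn_0[simp]: "(dA r ^^ k) 0 = 0"
  by (induction k) auto
lemma Dn_smult: "(dA r ^^ k) (smult c x) = smult c ((dA r ^^ k) x)"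
  by (induction k) (auto simp: dA_smult)
lemma Dn_minus: "(dA r ^^ k) (- x) = - (dA r ^^ k) x"
  by (induction k) (auto simp: dA_minus)
lemma Dn_diff: "(dA r ^^ k) (x - y) = (dA r ^^ k) x - (dA r ^^ k) y"
  by (induction k) (auto simp: dA_diff)
lemma Dn_sum: "(dA r ^^ k) (\<Sum>i\<in>A. g i) = (\<Sum>i\<in>A. (dA r ^^ k) (g i))"
  using sum_comp_morphism[of "dA r ^^ k" g A] by (simp add: Dn_add o_def)
lemma dA_sum: "dA r (\<Sum>i\<in>A. g i) = (\<Sum>i\<in>A. dA r (g i))"
  using Dn_sum[where k=1] by simp
lemma Dn_Suc': "(dA r ^^ Suc k) x = (dA r ^^ k) (dA r x)"
  by (simp add: funpow_swap1)
lemma Dn_Dn: "(dA r ^^ i) ((dA r ^^ j) x) = (dA r ^^ (i + j)) x"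
  by (simp add: funpow_add)

lemma leibniz:
  fixes g p :: "'k::field_char_0 poly"
  shows "(dA r ^^ j) (g * p) = (\<Sum>k\<le>j. smult (of_nat (j choose k)) ((dA r ^^ (j - k)) g * (dA r ^^ k) p))"
proof (induction j)
  case 0
  then show ?case by simp
next
  case (Suc n)
  define D :: "'k poly \<Rightarrow> 'k poly" where "D = dA r"
  define F where "F = (\<lambda>k. (D ^^ k) g)"
  define G where "G = (\<lambda>k. (D ^^ k) p)"
  have FS: "D (F k) = F (Suc k)" for k by (simp add: F_def D_def)
  have GS: "D (G k) = G (Suc k)" for k by (simp add: G_def D_def)
  have "(D ^^ Suc n) (g * p) = D (\<Sum>k\<le>n. smult (of_nat (n choose k)) (F (n - k) * G k))"
    using Suc.IH by (simp add: D_def F_def G_def)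
  also have "\<dots> = (\<Sum>k\<le>n. smult (of_nat (n choose k)) (F (Suc n - k) * G k))
       + (\<Sum>k\<le>n. smult (of_nat (n choose k)) (F (n - k) * G (Suc k)))"
  proof -
    have Dsum: "D (\<Sum>i\<in>A. h i) = (\<Sum>i\<in>A. D (h i))" for h and A :: "nat set"
      by (simp add: D_def dA_sum)
    have Dsm: "D (smult c (x * y)) = smult c (D x * y) + smult c (x * D y)" for c x y
      by (simp add: D_def dA_smult dA_mult smult_add_right)
    show ?thesis by (simp add: Dsum Dsm sum.distrib FS GS Suc_diff_le)
  qed
  also have "(\<Sum>k\<le>n. smult (of_nat (n choose k)) (F (n - k) * G (Suc k)))
      = (\<Sum>k=1..Suc n. smult (of_nat (n choose (k - 1))) (F (Suc n - k) * G k))"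
    by (simp add: atMost_atLeast0 sum.shift_bounds_cl_Suc_ivl del: sum.cl_ivl_Suc)
  also have "\<dots> = smult (of_nat (n choose n)) (F 0 * G (Suc n)) + (\<Sum>k=1..n. smult (of_nat (n choose (k - 1))) (F (Suc n - k) * G k))"
    by (subst sum.cl_ivl_Suc) (simp add: add.commute)
  also have "(\<Sum>k\<le>n. smult (of_nat (n choose k)) (F (Suc n - k) * G k))
      = smult (of_nat (n choose 0)) (F (Suc n) * G 0) + (\<Sum>k=1..n. smult (of_nat (n choose k)) (F (Suc n - k) * G k))"
    by (simp add: atMost_atLeast0 sum.atLeast_Suc_atMost)
  finally have "(D ^^ Suc n) (g * p) = smult (of_nat (Suc n choose 0)) (F (Suc n - 0) * G 0)
     + smult (of_nat (Suc n choose Suc n)) (F (Suc n - Suc n) * G (Suc n))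
     + (\<Sum>k=1..n. smult (of_nat (Suc n choose k)) (F (Suc n - k) * G k))"
    by (simp add: sum.distrib[symmetric] smult_add_left[symmetric] choose_reduce_nat algebra_simps)
  also have "\<dots> = (\<Sum>k\<le>Suc n. smult (of_nat (Suc n choose k)) (F (Suc n - k) * G k))"
  proof -
    have "{..Suc n} = {0} \<union> {Suc n} \<union> {1..n}" by auto
    then show ?thesis by (simp add: algebra_simps)
  qed
  finally show ?case by (simp add: D_def F_def G_def)
qed

definition ract :: "nat \<Rightarrow> 'k::field_char_0 poly \<Rightarrow> 'k poly poly \<Rightarrow> 'k poly" where
  "ract r f P = (\<Sum>i\<le>degree P. (dA r ^^ i) f * coeff P i)"

lemma ract_bound:
  assumes "degree P \<le> N"
  shows "ract r f P = (\<Sum>i\<le>N. (dA r ^^ i) f * coeff P i)"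
  unfolding ract_def
  by (rule sum.mono_neutral_left) (use assms in \<open>auto simp: coeff_eq_0\<close>)

lemma ract_add: "ract r f (P + Q) = ract r f P + ract r f Q"
proof -
  let ?N = "max (degree P) (degree Q)"
  have "degree (P + Q) \<le> ?N" by (rule degree_add_le) auto
  then show ?thesis
    by (simp add: ract_bound[of _ ?N] ract_bound[of P ?N] ract_bound[of Q ?N]
        distrib_left sum.distrib)
qed

lemma ract_0[simp]: "ract r f 0 = 0" by (simp add: ract_def)

lemma ract_minus: "ract r f (- P) = - ract r f P"
  by (simp add: ract_def sum_negf)

lemma ract_diff: "ract r f (P - Q) = ract r f P - ract r f Q"
  using ract_add[of r f P "- Q"] by (simp add: ract_minus)

lemma ract_sum: "ract r f (\<Sum>i\<in>A. P i) = (\<Sum>i\<in>A. ract r f (P i))"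
  using sum_comp_morphism[of "ract r f" P A] by (simp add: ract_add o_def)

lemma ract_monom: "ract r f (monom c m) = (dA r ^^ m) f * c"
proof -
  have "ract r f (monom c m) = (\<Sum>i\<le>m. (dA r ^^ i) f * coeff (monom c m) i)"
    by (rule ract_bound) (simp add: degree_monom_le)
  also have "\<dots> = (\<Sum>i\<le>m. if i = m then (dA r ^^ i) f * c else 0)"
    by (rule sum.cong) (auto simp: coeff_monom)
  finally show ?thesis by simp
qed

lemma ract_fadd: "ract r (f + g) P = ract r f P + ract r g P"
  by (simp add: ract_def Dn_add distrib_right sum.distrib)
lemma ract_fminus: "ract r (- f) P = - ract r f P"
  by (simp add: ract_def Dn_minus sum_negf)
lemma ract_fdiff: "ract r (f - g) P = ract r f P - ract r g P"
  by (simp add: ract_def Dn_diff left_diff_distrib sum_subtractf)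

lemma ract_omult: "ract r f (omult r P Q) = ract r (ract r f P) Q"
proof -
  let ?C = "\<lambda>j k. of_nat (j choose k) :: 'a"
  have "ract r f (omult r P Q) = (\<Sum>i\<le>degree P. \<Sum>j\<le>degree Q. \<Sum>k\<le>j.
      (dA r ^^ (i + j - k)) f * smult (?C j k) ((dA r ^^ k) (coeff P i) * coeff Q j))"
    by (simp add: omult_def ract_sum ract_monom)
  also have "\<dots> = (\<Sum>i\<le>degree P. \<Sum>j\<le>degree Q. \<Sum>k\<le>j.
      smult (?C j k) ((dA r ^^ (j - k)) ((dA r ^^ i) f) * (dA r ^^ k) (coeff P i)) * coeff Q j)"
    by (intro sum.cong refl) (simp add: Dn_Dn algebra_simps)
  also have "\<dots> = (\<Sum>j\<le>degree Q. \<Sum>i\<le>degree P. \<Sum>k\<le>j.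
      smult (?C j k) ((dA r ^^ (j - k)) ((dA r ^^ i) f) * (dA r ^^ k) (coeff P i)) * coeff Q j)"
    by (rule sum.swap)
  also have "\<dots> = (\<Sum>j\<le>degree Q. (dA r ^^ j) (\<Sum>i\<le>degree P. (dA r ^^ i) f * coeff P i) * coeff Q j)"
    by (simp add: Dn_sum leibniz sum_distrib_right)
  also have "\<dots> = ract r (ract r f P) Q" by (simp add: ract_def)
  finally show ?thesis .
qed

lemma coeff_omult_const_right: "coeff (omult r P [:q:]) m = coeff P m * q"
proof -
  have "omult r P [:q:] = (\<Sum>i\<le>degree P. monom (coeff P i * q) i)"
    by (simp add: omult_def)
  also have "coeff \<dots> m = (\<Sum>i\<le>degree P. if i = m then coeff P i * q else 0)"
    by (simp add: coeff_sum coeff_monom)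
  also have "\<dots> = coeff P m * q"
    by (auto simp: coeff_eq_0)
  finally show ?thesis .
qed

lemma coeff_omult_const_left:
  "coeff (omult r [:p:] Q) m = (\<Sum>j\<in>{m..degree Q}.
      smult (of_nat (j choose (j - m))) ((dA r ^^ (j - m)) p * coeff Q j))"
proof -
  have "coeff (omult r [:p:] Q) m = (\<Sum>j\<le>degree Q. \<Sum>k\<le>j.
      if j - k = m then smult (of_nat (j choose k)) ((dA r ^^ k) p * coeff Q j) else 0)"
    by (simp add: omult_def coeff_sum coeff_monom)
  also have "\<dots> = (\<Sum>j\<le>degree Q. if m \<le> j then
      smult (of_nat (j choose (j - m))) ((dA r ^^ (j - m)) p * coeff Q j) else 0)"
  proof (rule sum.cong[OF refl])
    fix j
    have "(\<Sum>k\<le>j. if j - k = m then smult (of_nat (j choose k)) ((dA r ^^ k) p * coeff Q j) else 0)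
       = (\<Sum>k\<le>j. if k = j - m \<and> m \<le> j then smult (of_nat (j choose k)) ((dA r ^^ k) p * coeff Q j) else 0)"
      by (rule sum.cong) auto
    also have "\<dots> = (if m \<le> j then
      smult (of_nat (j choose (j - m))) ((dA r ^^ (j - m)) p * coeff Q j) else 0)"
      by (cases "m \<le> j") auto
    finally show "(\<Sum>k\<le>j. if j - k = m then smult (of_nat (j choose k)) ((dA r ^^ k) p * coeff Q j) else 0)
       = (if m \<le> j then
      smult (of_nat (j choose (j - m))) ((dA r ^^ (j - m)) p * coeff Q j) else 0)" .
  qed
  also have "\<dots> = (\<Sum>j\<in>{m..degree Q}.
      smult (of_nat (j choose (j - m))) ((dA r ^^ (j - m)) p * coeff Q j))"
    by (subst sum.inter_filter[symmetric]) (auto intro: sum.cong)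
  finally show ?thesis .
qed

lemma coeff_omult_const_left_top:
  assumes "degree Q \<le> m"
  shows "coeff (omult r [:p:] Q) m = p * coeff Q m"
proof (cases "degree Q = m")
  case True
  then show ?thesis by (simp add: coeff_omult_const_left)
next
  case False
  then have "{m..degree Q} = {}" using assms by auto
  then show ?thesis using False assms by (simp add: coeff_omult_const_left coeff_eq_0)
qed

lemma coeff_omult_const_left_sub:
  assumes "degree Q = Suc n"
  shows "coeff (omult r [:p:] Q) n = p * coeff Q n + smult (of_nat (Suc n)) (dA r p * coeff Q (Suc n))"
proof -
  have "{n..degree Q} = {n, Suc n}" using assms by auto
  then show ?thesis by (simp add: coeff_omult_const_left)
qed

lemma pderiv_x[simp]: "pderiv [:0,1:] = 1" by (simp add: pderiv_pCons)

lemma ract_ga: "ract r f ga = f * [:0, 1:]"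
  by (simp add: ract_def ga_def)
lemma ract_one: "ract r f 1 = f"
  by (simp add: ract_def)
lemma ract_const: "ract r f [:p:] = f * p"
  by (simp add: ract_def)
lemma ract_gb: "ract r f gb = dA r f"
  by (simp add: ract_def gb_def)

lemma faithful_aux:
  fixes P :: "'k::field_char_0 poly poly"
  shows "degree P = n \<Longrightarrow> (\<forall>f. ract r f P = 0) \<Longrightarrow> P = 0"
proof (induction n arbitrary: P rule: less_induct)
  case (less n)
  show ?case
  proof (cases n)
    case 0
    then obtain c where c: "P = [:c:]" using less.prems(1) by (metis degree_eq_zeroE)
    have "ract r 1 P = c" by (simp add: c ract_const)
    then show ?thesis using less.prems(2) c by simp
  next
    case (Suc m)
    define Q where "Q = omult r P ga - omult r ga P"
    have kill: "\<forall>f. ract r f Q = 0"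
      using less.prems(2) by (simp add: Q_def ract_diff ract_omult ract_ga)
    have ga': "ga = [:[:0,1:]:]" by (simp add: ga_def)
    have top: "coeff Q k = 0" if "k \<ge> n" for k
      using that less.prems(1)
      by (simp add: Q_def ga' coeff_omult_const_right coeff_omult_const_left_top mult.commute)
    have "degree Q \<le> m"
      by (rule degree_le) (use top Suc in auto)
    then have dQ: "degree Q < n" using Suc by simp
    have "coeff Q m = - smult (of_nat (Suc m)) ([:0,1:] ^ r * coeff P n)"
      using less.prems(1) Suc
      by (simp add: Q_def ga' coeff_omult_const_right coeff_omult_const_left_sub mult.commute dA_def)
    moreover have "coeff P n \<noteq> 0"
      using less.prems(1) Suc by (metis leading_coeff_0_iff degree_0 nat.simps(3))
    ultimately have "coeff Q m \<noteq> 0" using of_nat_neq_0[of m, where 'a='k] by simp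
    then have "Q \<noteq> 0" by auto
    moreover have "Q = 0" using less.IH[OF dQ refl kill] .
    ultimately show ?thesis by simp
  qed
qed

lemma faithful: "(\<And>f. ract r f P = 0) \<Longrightarrow> P = 0"
  using faithful_aux by blast

lemma omult_ext: "(\<And>f. ract r f P = ract r f Q) \<Longrightarrow> P = Q"
  using faithful[of r "P - Q"] by (simp add: ract_diff)

lemma omult_assoc: "omult r (omult r P Q) R = omult r P (omult r Q R)"
  by (rule omult_ext[of r]) (simp add: ract_omult)

lemma omult_add_right: "omult r P (Q + R) = omult r P Q + omult r P R"
  by (rule omult_ext[of r]) (simp add: ract_omult ract_add)

lemma omult_add_left: "omult r (P + Q) R = omult r P R + omult r Q R"
  by (rule omult_ext[of r]) (simp add: ract_omult ract_add ract_fadd)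

lemma omult_diff_right: "omult r P (Q - R) = omult r P Q - omult r P R"
  by (rule omult_ext[of r]) (simp add: ract_omult ract_diff)

lemma omult_diff_left: "omult r (P - Q) R = omult r P R - omult r Q R"
  by (rule omult_ext[of r]) (simp add: ract_omult ract_diff ract_fdiff)

lemma omult_minus_left: "omult r (- P) R = - omult r P R"
  by (rule omult_ext[of r]) (simp add: ract_omult ract_minus ract_fminus)

lemma omult_one_left[simp]: "omult r 1 P = P"
  by (rule omult_ext[of r]) (simp add: ract_omult ract_one)

lemma omult_one_right[simp]: "omult r P 1 = P"
  by (rule omult_ext[of r]) (simp add: ract_omult ract_one)

lemma ract_fzero[simp]: "ract r 0 P = 0" by (simp add: ract_def)
lemma Dn_swap: "dA r ((dA r ^^ i) f) = (dA r ^^ i) (dA r f)" by (simp add: funpow_swap1)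

lemma omult_0_left[simp]: "omult r 0 P = 0"
  by (rule omult_ext[of r]) (simp add: ract_omult)

lemma omult_0_right[simp]: "omult r P 0 = 0"
  by (rule omult_ext[of r]) (simp add: ract_omult)

lemma omult_sum_left: "omult r (\<Sum>i\<in>A. P i) R = (\<Sum>i\<in>A. omult r (P i) R)"
  using sum_comp_morphism[of "\<lambda>X. omult r X R" P A] by (simp add: omult_add_left o_def)

lemma omult_const_right: "omult r P [:q:] = map_poly (\<lambda>p. p * q) P"
  by (rule poly_eqI) (simp add: coeff_omult_const_right coeff_map_poly)

lemma ract_pCons0: "ract r f (pCons 0 Q) = ract r (dA r f) Q"
proof -
  have "ract r f (pCons 0 Q) = (\<Sum>i\<le>Suc (degree Q). (dA r ^^ i) f * coeff (pCons 0 Q) i)"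
    by (rule ract_bound) (simp add: degree_pCons_le)
  also have "\<dots> = (\<Sum>i\<le>degree Q. (dA r ^^ Suc i) f * coeff Q i)"
    by (subst sum.atMost_Suc_shift) simp
  also have "\<dots> = ract r (dA r f) Q"
    by (simp add: ract_def Dn_swap)
  finally show ?thesis .
qed

lemma ract_map_dA: "ract r f (map_poly (dA r) c) = (\<Sum>i\<le>degree c. (dA r ^^ i) f * dA r (coeff c i))"
  by (subst ract_bound[of _ "degree c"]) (simp_all add: map_poly_degree_leq coeff_map_poly)

lemma omult_gb_left: "omult r gb Q = pCons 0 Q"
  by (rule omult_ext[of r]) (simp add: ract_omult ract_gb ract_pCons0)

lemma omult_gb_right: "omult r c gb = pCons 0 c + map_poly (dA r) c"
proof (rule omult_ext[of r])
  fix f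
  have "ract r f (omult r c gb) = dA r (\<Sum>i\<le>degree c. (dA r ^^ i) f * coeff c i)"
    by (simp add: ract_omult ract_gb) (simp add: ract_def)
  also have "\<dots> = (\<Sum>i\<le>degree c. (dA r ^^ Suc i) f * coeff c i) + (\<Sum>i\<le>degree c. (dA r ^^ i) f * dA r (coeff c i))"
    by (simp add: dA_sum dA_mult sum.distrib)
  also have "\<dots> = ract r f (pCons 0 c + map_poly (dA r) c)"
    by (simp add: ract_add ract_pCons0 ract_map_dA) (simp add: ract_def Dn_swap)
  finally show "ract r f (omult r c gb) = ract r f (pCons 0 c + map_poly (dA r) c)" .
qed

lemma omult_const_const: "omult r [:p:] [:q:] = [:p * q:]"
  by (rule omult_ext[of r]) (simp add: ract_omult ract_const mult.assoc)

lemma omult_ga_const: "omult r ga [:q:] = [:[:0,1:] * q:]"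
  by (simp add: ga_def omult_const_const)

lemma left_ideal_lprinc: "left_ideal r (lprinc r y)"
  unfolding left_ideal_def lprinc_def
proof (intro conjI ballI allI)
  show "0 \<in> {omult r c y |c. True}" by (auto intro: exI[of _ 0])
next
  fix u v assume "u \<in> {omult r c y |c. True}" "v \<in> {omult r c y |c. True}"
  then obtain c d where "u = omult r c y" "v = omult r d y" by auto
  then show "u + v \<in> {omult r c y |c. True}" by (metis (mono_tags, lifting) mem_Collect_eq omult_add_left)
next
  fix u assume "u \<in> {omult r c y |c. True}"
  then obtain c where "u = omult r c y" by auto
  then show "- u \<in> {omult r c y |c. True}" by (auto simp: omult_minus_left[symmetric])
next
  fix e u assume "u \<in> {omult r c y |c. True}"
  then obtain c where "u = omult r c y" by auto
  then show "omult r e u \<in> {omult r c y |c. True}" by (auto simp: omult_assoc[symmetric])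
qed

lemma left_ideal_diff: "left_ideal r I \<Longrightarrow> u \<in> I \<Longrightarrow> v \<in> I \<Longrightarrow> u - v \<in> I"
  unfolding left_ideal_def by (metis diff_conv_add_uminus)

definition rho :: "'k::field_char_0 poly poly \<Rightarrow> 'k poly" where
  "rho P = map_poly (\<lambda>p. poly p 1) P"
definition lift :: "'k::field_char_0 poly \<Rightarrow> 'k poly poly" where
  "lift g = map_poly (\<lambda>c. [:c:]) g"

lemma coeff_rho: "coeff (rho P) i = poly (coeff P i) 1"
  by (simp add: rho_def coeff_map_poly)
lemma coeff_lift: "coeff (lift g) i = [:coeff g i:]"
  by (simp add: lift_def coeff_map_poly)
lemma rho_diff: "rho (P - Q) = rho P - rho Q"
  by (rule poly_eqI) (simp add: coeff_rho)
lemma rho_add: "rho (P + Q) = rho P + rho Q"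
  by (rule poly_eqI) (simp add: coeff_rho)
lemma rho_lift[simp]: "rho (lift g) = g"
  by (rule poly_eqI) (simp add: coeff_rho coeff_lift)
lemma rho_one[simp]: "rho 1 = 1"
  by (simp add: rho_def)
lemma degree_lift[simp]: "degree (lift g) = degree g"
  unfolding lift_def by (rule degree_map_poly) simp
lemma pCons0_rho: "rho (pCons 0 P) = pCons 0 (rho P)"
  by (rule poly_eqI) (simp add: coeff_rho coeff_pCons split: nat.split)

lemma ga_minus_1: "ga - 1 = [:[:-1, 1:]:]"
  by (simp add: ga_def one_pCons)

lemma J_char: "P \<in> lprinc r (ga - 1) \<longleftrightarrow> rho P = 0"
proof
  assume "P \<in> lprinc r (ga - 1)"
  then obtain c where c: "P = omult r c [:[:-1, 1:]:]" by (auto simp: lprinc_def ga_minus_1)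
  show "rho P = 0"
    by (rule poly_eqI) (simp add: c coeff_rho omult_const_right coeff_map_poly)
next
  assume h: "rho P = 0"
  define c where "c = map_poly (\<lambda>p. p div [:-1, 1:]) P"
  have dv: "[:-1, 1:] dvd coeff P i" for i
    using arg_cong[OF h, of "\<lambda>X. coeff X i"] by (simp add: coeff_rho poly_eq_0_iff_dvd)
  have "omult r c [:[:-1, 1:]:] = P"
    by (rule poly_eqI) (simp only: c_def omult_const_right coeff_map_poly div_0 mult_zero_left dvd_div_mult_self[OF dv])
  then show "P \<in> lprinc r (ga - 1)" by (auto simp: lprinc_def ga_minus_1)
qed

lemma lift_rho_in_J: "P - lift (rho P) \<in> lprinc r (ga - 1)"
  by (simp add: J_char rho_diff)

lemma key_step:
  fixes g :: "'k::field_char_0 poly" and r :: nat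
  assumes "degree g = Suc n"
  defines "h \<equiv> rho (omult r [:[:-1, 1:]:] (lift g))"
  shows "degree h = n" "h \<noteq> 0"
proof -
  have top: "coeff h k = 0" if "k > n" for k
  proof -
    have "degree (lift g) \<le> k" using that assms by simp
    then show ?thesis
      by (simp add: h_def coeff_rho coeff_omult_const_left_top coeff_lift)
  qed
  have "coeff h n = of_nat (Suc n) * coeff g (Suc n)"
    using assms
    by (simp add: h_def coeff_rho coeff_omult_const_left_sub coeff_lift dA_def pderiv_pCons)
  moreover have "coeff g (Suc n) \<noteq> 0"
    using assms by (metis leading_coeff_0_iff degree_0 nat.simps(3))
  ultimately have hn: "coeff h n \<noteq> 0" using of_nat_neq_0[of n, where 'a='k] by simp
  then show "h \<noteq> 0" by auto
  have "degree h \<le> n" by (rule degree_le) (use top in auto)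
  moreover have "n \<le> degree h" using hn le_degree by blast
  ultimately show "degree h = n" by simp
qed

lemma maximal_step:
  fixes g :: "'k::field_char_0 poly"
  assumes LI: "left_ideal r I" and JI: "lprinc r (ga - 1) \<subseteq> I"
  shows "degree g = n \<Longrightarrow> g \<noteq> 0 \<Longrightarrow> lift g \<in> I \<Longrightarrow> 1 \<in> I"
proof (induction n arbitrary: g)
  case 0
  then obtain c where c: "g = [:c:]" by (metis degree_eq_zeroE)
  with 0 have "c \<noteq> 0" by simp
  have "lift g = [:[:c:]:]" by (rule poly_eqI) (simp add: c coeff_lift coeff_pCons split: nat.split)
  then have "omult r [:[:inverse c:]:] (lift g) \<in> I" using LI 0 unfolding left_ideal_def by blast
  moreover have "omult r [:[:inverse c:]:] (lift g) = 1"
    using \<open>c \<noteq> 0\<close> \<open>lift g = _\<close> by (simp add: omult_const_const one_pCons)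
  ultimately show ?case by simp
next
  case (Suc n)
  define X where "X = omult r [:[:-1, 1:]:] (lift g)"
  have XI: "X \<in> I" using LI Suc.prems unfolding left_ideal_def X_def by blast
  have "X - lift (rho X) \<in> I" using JI lift_rho_in_J by blast
  then have "lift (rho X) \<in> I" using left_ideal_diff[OF LI XI] by fastforce
  moreover have "degree (rho X) = n" "rho X \<noteq> 0"
    using key_step[OF Suc.prems(1)] by (simp_all add: X_def)
  ultimately show ?case using Suc.IH by blast
qed

lemma J_maximal: "maximal_left_ideal r (lprinc r (ga - 1))"
  unfolding maximal_left_ideal_def
proof (intro conjI allI impI)
  show "left_ideal r (lprinc r (ga - 1))" by (rule left_ideal_lprinc)
  show "lprinc r (ga - 1) \<noteq> UNIV" using J_char[of 1 r] by auto
next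
  fix I assume h: "left_ideal r I \<and> lprinc r (ga - 1) \<subseteq> I"
  show "I = lprinc r (ga - 1) \<or> I = UNIV"
  proof (cases "I = lprinc r (ga - 1)")
    case False
    then obtain P where P: "P \<in> I" "P \<notin> lprinc r (ga - 1)" using h by blast
    then have "rho P \<noteq> 0" using J_char by blast
    have "P - lift (rho P) \<in> I" using h lift_rho_in_J by blast
    then have "lift (rho P) \<in> I" using left_ideal_diff[of r I P] h P by fastforce
    then have "1 \<in> I" using maximal_step[of r I "rho P"] h \<open>rho P \<noteq> 0\<close> by blast
    then have "I = UNIV"
    proof -
      have "omult r c 1 \<in> I" for c using h \<open>1 \<in> I\<close> unfolding left_ideal_def by blast
      then show ?thesis by auto
    qed
    then show ?thesis by simp
  qed simp
qed

definition sm :: "nat \<Rightarrow> nat \<Rightarrow> 'k::field_char_0 poly poly" where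
  "sm r m = gb - 1 + [:smult (of_nat m) ([:0,1:] ^ (r - 1)):]"

lemma sm_0: "sm r 0 = gb - 1" by (simp add: sm_def)

lemma omult_right_cancel_ga: "omult r z ga = omult r z' ga \<Longrightarrow> z = z'"
proof (rule omult_ext[of r])
  fix f assume "omult r z ga = omult r z' ga"
  then have "ract r f (omult r z ga) = ract r f (omult r z' ga)" by simp
  then have "ract r f z * [:0,1:] = ract r f z' * [:0,1:]" by (simp add: ract_omult ract_ga)
  then show "ract r f z = ract r f z'" by simp
qed

lemma sm_step:
  assumes "r \<ge> 1"
  shows "omult r ga (sm r m) = omult r (sm r (Suc m)) ga"
proof (rule omult_ext[of r])
  fix f :: "'a poly"
  obtain r' where r: "r = Suc r'" using assms by (cases r) auto
  show "ract r f (omult r ga (sm r m)) = ract r f (omult r (sm r (Suc m)) ga)"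
    by (simp add: ract_omult ract_ga sm_def ract_add ract_diff ract_gb ract_one ract_const
        dA_mult r dA_def pderiv_pCons algebra_simps smult_add_left)
qed

lemma sigma_sm: "r \<ge> 1 \<Longrightarrow> sigma r (sm r m) = sm r (Suc m)"
  unfolding sigma_def
  by (rule the_equality) (use sm_step omult_right_cancel_ga in metis)+

lemma sigma_pow: "r \<ge> 1 \<Longrightarrow> (sigma r ^^ m) (gb - 1) = sm r m"
  by (induction m) (simp_all add: sm_0 sigma_sm)

lemma rho_const_omult_zero:
  assumes "\<And>j. j \<ge> k \<Longrightarrow> coeff (rho c) j = 0"
  shows "coeff (rho (omult r [:t:] c)) k = 0"
proof -
  have "coeff (rho (omult r [:t:] c)) k = (\<Sum>j\<in>{k..degree c}.
      of_nat (j choose (j - k)) * (poly ((dA r ^^ (j - k)) t) 1 * poly (coeff c j) 1))"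
    by (simp add: coeff_rho coeff_omult_const_left poly_sum)
  also have "\<dots> = 0"
    using assms by (intro sum.neutral) (auto simp: coeff_rho)
  finally show ?thesis .
qed

lemma not_in_J: "omult r (gb + [:t:]) c - 1 \<notin> lprinc r (ga - 1)"
proof
  assume "omult r (gb + [:t:]) c - 1 \<in> lprinc r (ga - 1)"
  then have z: "rho (omult r (gb + [:t:]) c - 1) = 0" by (simp add: J_char)
  have e: "rho (omult r (gb + [:t:]) c - 1) = pCons 0 (rho c) + rho (omult r [:t:] c) - 1"
    by (simp add: omult_add_left omult_gb_left rho_diff rho_add pCons0_rho)
  show False
  proof (cases "rho c = 0")
    case True
    have "rho (omult r [:t:] c) = 0"
      by (rule poly_eqI) (simp add: rho_const_omult_zero True)
    then show False using z e True by simp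
  next
    case False
    let ?d = "degree (rho c)"
    have "coeff (rho (omult r [:t:] c)) (Suc ?d) = 0"
      by (rule rho_const_omult_zero) (simp add: coeff_eq_0)
    then have "coeff (rho (omult r (gb + [:t:]) c - 1)) (Suc ?d) = coeff (rho c) ?d"
      by (simp add: e)
    also have "\<dots> \<noteq> 0" using False by simp
    finally show False using z by simp
  qed
qed

lemma part_a2:
  assumes "r \<ge> 1"
  shows "omult r ((sigma r ^^ m) (gb - 1)) c - 1 \<notin> lprinc r (ga - 1)"
proof -
  have "(sigma r ^^ m) (gb - 1) = gb + [:smult (of_nat m) ([:0,1:] ^ (r - 1)) - 1:]"
  proof -
    have "[:smult (of_nat m) ([:0,1:] ^ (r - 1)) - 1:] = [:smult (of_nat m) ([:0,1:] ^ (r - 1)):] - (1::'a poly poly)"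
      by (simp add: one_pCons)
    then show ?thesis by (simp add: sigma_pow[OF assms] sm_def) (simp add: one_pCons)
  qed
  then show ?thesis using not_in_J by metis
qed

definition E :: "nat \<Rightarrow> 'k::field_char_0 poly \<Rightarrow> 'k poly" where
  "E r g = g - dA r g"

lemma E_add: "E r (x + y) = E r x + E r y" by (simp add: E_def dA_add)
lemma En_add: "(E r ^^ k) (x + y) = (E r ^^ k) x + (E r ^^ k) y"
  by (induction k) (auto simp: E_add)
lemma En_0[simp]: "(E r ^^ k) 0 = 0" by (induction k) (auto simp: E_def)
lemma En_minus: "(E r ^^ k) (- x) = - (E r ^^ k) x"
  by (induction k) (auto simp: E_def dA_minus)
lemma En_diff: "(E r ^^ k) (x - y) = (E r ^^ k) x - (E r ^^ k) y"
  using En_add[where r=r and k=k and x=x and y="- y"] by (simp add: En_minus)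
lemma En_sum: "(E r ^^ k) (\<Sum>i\<in>A. g i) = (\<Sum>i\<in>A. (E r ^^ k) (g i))"
  using sum_comp_morphism[of "E r ^^ k" g A] by (simp add: En_add o_def)
lemma E_sum: "E r (\<Sum>i\<in>A. g i) = (\<Sum>i\<in>A. E r (g i))"
  using En_sum[where k=1] by simp

definition phi :: "nat \<Rightarrow> 'k::field_char_0 poly poly \<Rightarrow> 'k poly" where
  "phi r P = (\<Sum>i\<le>degree P. (E r ^^ i) (coeff P i))"

lemma phi_bound:
  assumes "degree P \<le> N"
  shows "phi r P = (\<Sum>i\<le>N. (E r ^^ i) (coeff P i))"
  unfolding phi_def
  by (rule sum.mono_neutral_left) (use assms in \<open>auto simp: coeff_eq_0\<close>)

lemma phi_add: "phi r (P + Q) = phi r P + phi r Q"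
proof -
  let ?N = "max (degree P) (degree Q)"
  have "degree (P + Q) \<le> ?N" by (rule degree_add_le) auto
  then show ?thesis
    by (simp add: phi_bound[of _ ?N] phi_bound[of P ?N] phi_bound[of Q ?N] En_add sum.distrib)
qed
lemma phi_0[simp]: "phi r 0 = 0" by (simp add: phi_def)
lemma phi_minus: "phi r (- P) = - phi r P" by (simp add: phi_def En_minus sum_negf)
lemma phi_diff: "phi r (P - Q) = phi r P - phi r Q"
  using phi_add[of r P "- Q"] by (simp add: phi_minus)
lemma phi_const[simp]: "phi r [:g:] = g" by (simp add: phi_def)

lemma phi_pCons0: "phi r (pCons 0 c) = E r (phi r c)"
proof -
  have "phi r (pCons 0 c) = (\<Sum>i\<le>Suc (degree c). (E r ^^ i) (coeff (pCons 0 c) i))"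
    by (rule phi_bound) (simp add: degree_pCons_le)
  also have "\<dots> = (\<Sum>i\<le>degree c. (E r ^^ Suc i) (coeff c i))"
    by (subst sum.atMost_Suc_shift) simp
  also have "\<dots> = E r (phi r c)"
    by (simp add: phi_def E_sum)
  finally show ?thesis .
qed

lemma phi_map_dA: "phi r (map_poly (dA r) c) = (\<Sum>i\<le>degree c. (E r ^^ i) (dA r (coeff c i)))"
proof -
  have "phi r (map_poly (dA r) c) = (\<Sum>i\<le>degree c. (E r ^^ i) (coeff (map_poly (dA r) c) i))"
    by (rule phi_bound) (rule map_poly_degree_leq)
  then show ?thesis by (simp add: coeff_map_poly)
qed

lemma phi_Lx: "phi r (omult r c (gb - 1)) = 0"
proof -
  have "phi r (omult r c (gb - 1)) = E r (phi r c) + phi r (map_poly (dA r) c) - phi r c"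
    by (simp add: omult_diff_right omult_gb_right phi_add phi_diff phi_pCons0)
  also have "\<dots> = (\<Sum>i\<le>degree c. (E r ^^ Suc i) (coeff c i)) +
     (\<Sum>i\<le>degree c. (E r ^^ i) (dA r (coeff c i))) - (\<Sum>i\<le>degree c. (E r ^^ i) (coeff c i))"
    by (simp add: phi_map_dA) (simp add: phi_def E_sum)
  also have "\<dots> = (\<Sum>i\<le>degree c. (E r ^^ i) (E r (coeff c i)) + (E r ^^ i) (dA r (coeff c i)) - (E r ^^ i) (coeff c i))"
    by (simp add: sum.distrib sum_subtractf funpow_swap1)
  also have "\<dots> = 0"
    by (rule sum.neutral) (simp add: E_def En_diff)
  finally show ?thesis .
qed

lemma omult_const_x: "omult r [:q:] (gb - 1) = monom q 1 - [:E r q:]"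
  by (rule omult_ext[of r]) (simp add: ract_omult ract_const ract_diff ract_gb ract_one ract_monom E_def dA_mult algebra_simps)

lemma monom_in_L: "\<exists>W. monom p i - [:(E r ^^ i) p:] = omult r W (gb - 1)"
proof (induction i arbitrary: p)
  case 0
  then show ?case by (auto intro: exI[of _ 0] simp: monom_0)
next
  case (Suc i)
  obtain W where W: "monom p i - [:(E r ^^ i) p:] = omult r W (gb - 1)" using Suc by blast
  have "monom p (Suc i) - [:(E r ^^ Suc i) p:]
      = omult r gb (monom p i - [:(E r ^^ i) p:]) + (monom ((E r ^^ i) p) 1 - [:E r ((E r ^^ i) p):])"
    by (simp add: omult_diff_right omult_gb_left monom_Suc monom_0)
  also have "\<dots> = omult r (omult r gb W + [:(E r ^^ i) p:]) (gb - 1)"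
    by (simp add: W omult_const_x omult_add_left omult_assoc)
  finally show ?case by blast
qed

lemma P_minus_phi:
  fixes P :: "'k::field_char_0 poly poly"
  shows "\<exists>W. P - [:phi r P:] = omult r W (gb - 1)"
proof -
  define W :: "'k poly \<Rightarrow> nat \<Rightarrow> 'k poly poly" where "W p i = (SOME W. monom p i - [:(E r ^^ i) p:] = omult r W (gb - 1))" for p i
  have W: "monom p i - [:(E r ^^ i) p:] = omult r (W p i) (gb - 1)" for p i
    unfolding W_def by (rule someI_ex) (rule monom_in_L)
  have "[:phi r P:] = (\<Sum>i\<le>degree P. [:(E r ^^ i) (coeff P i):])"
    by (simp add: phi_def monom_0[symmetric] monom_sum)
  then have "P - [:phi r P:] = (\<Sum>i\<le>degree P. monom (coeff P i) i - [:(E r ^^ i) (coeff P i):])"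
    by (simp add: sum_subtractf poly_as_sum_of_monoms)
  also have "\<dots> = omult r (\<Sum>i\<le>degree P. W (coeff P i) i) (gb - 1)"
    by (simp add: W omult_sum_left)
  finally show ?thesis by blast
qed

lemma L_char: "P \<in> lprinc r (gb - 1) \<longleftrightarrow> phi r P = 0"
proof
  assume "P \<in> lprinc r (gb - 1)"
  then show "phi r P = 0" by (auto simp: lprinc_def phi_Lx)
next
  assume "phi r P = 0"
  then show "P \<in> lprinc r (gb - 1)"
    using P_minus_phi[of P r] by (auto simp: lprinc_def)
qed

definition fib :: "nat \<Rightarrow> 'k::field_char_0 poly \<Rightarrow> 'k poly poly set" where
  "fib r g = {P. phi r P = g}"

lemma qcoset_fib: "qcoset (lprinc r (gb - 1)) u = fib r (phi r u)"
  unfolding qcoset_def fib_def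
proof (intro set_eqI iffI)
  fix P assume "P \<in> {u + y |y. y \<in> lprinc r (gb - 1)}"
  then show "P \<in> {P. phi r P = phi r u}" by (auto simp: L_char phi_add)
next
  fix P assume "P \<in> {P. phi r P = phi r u}"
  then have "P = u + (P - u)" "P - u \<in> lprinc r (gb - 1)" by (auto simp: L_char phi_diff)
  then show "P \<in> {u + y |y. y \<in> lprinc r (gb - 1)}" by blast
qed

lemma qcarrier_fib: "qcarrier (lprinc r (gb - 1)) = range (fib r)"
proof -
  have "qcoset (lprinc r (gb - 1)) [:g:] = fib r g" for g
    by (simp add: qcoset_fib)
  then show ?thesis unfolding qcarrier_def by (auto simp: qcoset_fib) (metis phi_const rangeI)
qed

lemma fib_inj: "fib r g = fib r h \<Longrightarrow> g = h"
  unfolding fib_def by (metis (mono_tags) mem_Collect_eq phi_const)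

lemma fib_inj_iff: "fib r g = fib r h \<longleftrightarrow> g = h"
  using fib_inj by blast

lemma qadd_fib: "qadd (fib r g) (fib r h) = fib r (g + h)"
  unfolding qadd_def fib_def
proof (intro set_eqI iffI)
  fix P assume "P \<in> {u + v |u v. u \<in> {P. phi r P = g} \<and> v \<in> {P. phi r P = h}}"
  then show "P \<in> {P. phi r P = g + h}" by (auto simp: phi_add)
next
  fix P assume "P \<in> {P. phi r P = g + h}"
  then have "P = (P - [:h:]) + [:h:]" "phi r (P - [:h:]) = g" by (auto simp: phi_diff)
  then show "P \<in> {u + v |u v. u \<in> {P. phi r P = g} \<and> v \<in> {P. phi r P = h}}"
    by (metis (mono_tags, lifting) mem_Collect_eq phi_const)
qed

definition act :: "nat \<Rightarrow> 'k::field_char_0 poly poly \<Rightarrow> 'k poly \<Rightarrow> 'k poly" where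
  "act r c g = phi r (omult r c [:g:])"

lemma phi_omult: "phi r (omult r c u) = act r c (phi r u)"
proof -
  obtain W where "u - [:phi r u:] = omult r W (gb - 1)" using P_minus_phi by blast
  then have "omult r c u - omult r c [:phi r u:] = omult r (omult r c W) (gb - 1)"
    by (simp add: omult_diff_right[symmetric] omult_assoc)
  then have "phi r (omult r c u - omult r c [:phi r u:]) = 0" by (simp add: phi_Lx)
  then show ?thesis by (simp add: act_def phi_diff)
qed

lemma qsmult_fib: "qsmult r (lprinc r (gb - 1)) c (fib r g) = fib r (act r c g)"
  unfolding qsmult_def
proof (intro set_eqI iffI)
  fix P assume "P \<in> {omult r c u + y |u y. u \<in> fib r g \<and> y \<in> lprinc r (gb - 1)}"
  then show "P \<in> fib r (act r c g)" by (auto simp: fib_def L_char phi_add phi_omult)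
next
  fix P assume P: "P \<in> fib r (act r c g)"
  have "P = omult r c [:g:] + (P - omult r c [:g:])" by simp
  moreover have "[:g:] \<in> fib r g" by (simp add: fib_def)
  moreover have "P - omult r c [:g:] \<in> lprinc r (gb - 1)"
    using P by (simp add: fib_def L_char phi_diff act_def)
  ultimately show "P \<in> {omult r c u + y |u y. u \<in> fib r g \<and> y \<in> lprinc r (gb - 1)}" by blast
qed

lemma act_const: "act r [:p:] g = p * g"
  by (simp add: act_def omult_const_const)

lemma act_gb: "act r gb g = E r g"
  by (simp add: act_def omult_gb_left phi_pCons0)

lemma act_formula: "act r c g = (\<Sum>i\<le>degree c. (E r ^^ i) (coeff c i * g))"
  unfolding act_def omult_const_right
  by (subst phi_bound[of _ "degree c"]) (simp_all add: map_poly_degree_leq coeff_map_poly)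

lemma dvd_x_cancel:
  fixes w y :: "'k::field poly"
  assumes "\<not> [:0,1:] dvd w" "w dvd [:0,1:] * y"
  shows "w dvd y"
proof -
  obtain c0 w1 where w: "w = pCons c0 w1" by (cases w) auto
  have c0: "c0 \<noteq> 0"
  proof
    assume "c0 = 0"
    then have "w = [:0,1:] * w1" by (simp add: w)
    then have "[:0,1:] dvd w" by (rule dvdI)
    then show False using assms(1) by simp
  qed
  have "smult c0 y = w * y - w1 * ([:0,1:] * y)"
    by (simp add: w algebra_simps)
  moreover have "w dvd w * y - w1 * ([:0,1:] * y)"
  proof -
    have "w dvd w1 * ([:0,1:] * y)" using assms(2) by (rule dvd_mult)
    then show ?thesis by (rule dvd_diff[OF dvd_triv_left])
  qed
  ultimately have "w dvd smult c0 y" by simp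
  then show ?thesis using c0 by (simp add: dvd_smult_iff)
qed

lemma dvd_xpow_cancel:
  fixes w y :: "'k::field poly"
  assumes "\<not> [:0,1:] dvd w"
  shows "w dvd [:0,1:] ^ n * y \<Longrightarrow> w dvd y"
proof (induction n)
  case 0 then show ?case by simp
next
  case (Suc n)
  then show ?case using dvd_x_cancel[OF assms, of "[:0,1:] ^ n * y"] by (simp add: mult.assoc)
qed


lemma D_apow:
  fixes w :: "'k::field_char_0 poly"
  assumes "r \<ge> 1"
  shows "dA r ([:0,1:] ^ m * w) = [:0,1:] ^ m * (smult (of_nat m) ([:0,1:] ^ (r - 1)) * w + [:0,1:] ^ r * pderiv w)"
proof -
  obtain r' where r: "r = Suc r'" using assms by (cases r) auto
  have "[:0,1:] ^ r * pderiv ([:0,1:] ^ m :: 'k poly) = [:0,1:] ^ m * smult (of_nat m) ([:0,1:] ^ (r - 1))"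
  proof (cases m)
    case 0 then show ?thesis by simp
  next
    case (Suc m')
    have e: "[:0,1:] ^ r * [:0,1:] ^ m' = ([:0,1:] ^ Suc m' * [:0,1:] ^ (r - 1) :: 'k poly)"
      by (metis power_add add_Suc add.commute r diff_Suc_1)
    have "[:0,1:] ^ r * pderiv ([:0,1:] ^ m :: 'k poly) = smult (of_nat m) ([:0,1:] ^ r * [:0,1:] ^ m')"
      by (simp only: Suc pderiv_power_Suc pderiv_x mult_1_right mult_smult_right)
    also have "\<dots> = [:0,1:] ^ m * smult (of_nat m) ([:0,1:] ^ (r - 1))"
      by (simp only: e Suc mult_smult_right)
    finally show ?thesis .
  qed
  then show ?thesis
    by (simp add: dA_def pderiv_mult algebra_simps)
qed

definition Mm :: "nat \<Rightarrow> 'k::field_char_0 poly set" where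
  "Mm m = range (\<lambda>h. [:0,1:] ^ m * h)"

definition closedT :: "nat \<Rightarrow> 'k::field_char_0 poly set \<Rightarrow> bool" where
  "closedT r T \<longleftrightarrow> 0 \<in> T \<and> (\<forall>g\<in>T. \<forall>h\<in>T. g + h \<in> T) \<and> (\<forall>p. \<forall>g\<in>T. p * g \<in> T)
     \<and> (\<forall>g\<in>T. dA r g \<in> T)"

lemma closedT_sum: "closedT r T \<Longrightarrow> (\<And>i. i \<in> A \<Longrightarrow> f i \<in> T) \<Longrightarrow> sum f A \<in> T"
  by (induction A rule: infinite_finite_induct) (auto simp: closedT_def)

lemma closedT_E: "closedT r T \<Longrightarrow> g \<in> T \<Longrightarrow> (E r ^^ i) g \<in> T"
proof (induction i)
  case 0 then show ?case by simp
next
  case (Suc i)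
  then have a: "(E r ^^ i) g \<in> T" by simp
  have "(E r ^^ Suc i) g = (E r ^^ i) g + (-1) * dA r ((E r ^^ i) g)" by (simp add: E_def)
  then show ?case using a Suc.prems(1) unfolding closedT_def by metis
qed

lemma closedT_act: "closedT r T \<Longrightarrow> g \<in> T \<Longrightarrow> act r c g \<in> T"
  unfolding act_formula
  by (rule closedT_sum) (auto intro!: closedT_E simp: closedT_def)

lemma closedT_Mm: "r \<ge> 1 \<Longrightarrow> closedT r (Mm m :: 'k::field_char_0 poly set)"
  unfolding closedT_def Mm_def
proof (intro conjI ballI allI)
  show "0 \<in> range (\<lambda>h. [:0,1:] ^ m * h)" by (auto intro: image_eqI[of _ _ 0])
next
  fix g h :: "'k poly" assume "g \<in> range (\<lambda>h. [:0,1:] ^ m * h)" "h \<in> range (\<lambda>h. [:0,1:] ^ m * h)"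
  then show "g + h \<in> range (\<lambda>h. [:0,1:] ^ m * h)" by (auto simp: distrib_left[symmetric])
next
  fix p g assume "g \<in> range (\<lambda>h. [:0,1:] ^ m * (h :: 'k poly))"
  then show "p * g \<in> range (\<lambda>h. [:0,1:] ^ m * h)"
    by (auto simp: mult.left_commute intro: rangeI)
next
  fix g assume "r \<ge> 1" "g \<in> range (\<lambda>h. [:0,1:] ^ m * (h :: 'k poly))"
  then show "dA r g \<in> range (\<lambda>h. [:0,1:] ^ m * h)" by (auto simp: D_apow)
qed

lemma ideal_classify:
  fixes T :: "'k::field_char_0 poly set"
  assumes r: "r \<ge> 1" and T: "closedT r T" and nz: "g0 \<in> T" "g0 \<noteq> 0"
  shows "\<exists>m. T = Mm m"
proof -
  have neg: "- x \<in> T" if "x \<in> T" for x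
    using T that unfolding closedT_def by (metis mult_minus1)
  have sub: "x - y \<in> T" if "x \<in> T" "y \<in> T" for x y
    using T neg[OF that(2)] that(1) unfolding closedT_def by (metis diff_conv_add_uminus)
  define n where "n = (LEAST n. \<exists>g\<in>T. g \<noteq> 0 \<and> degree g = n)"
  have "\<exists>g\<in>T. g \<noteq> 0 \<and> degree g = n"
    unfolding n_def by (rule LeastI_ex) (use nz in blast)
  then obtain g where g: "g \<in> T" "g \<noteq> 0" "degree g = n" by blast
  have minl: "degree h \<ge> n" if "h \<in> T" "h \<noteq> 0" for h
    unfolding n_def by (rule Least_le) (use that in blast)
  have dvdT: "g dvd h" if "h \<in> T" for h
  proof -
    have "h mod g = h - (h div g) * g" by (simp add: minus_div_mult_eq_mod)
    then have hm: "h mod g \<in> T" using sub[OF that] T g(1) unfolding closedT_def by metis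
    show ?thesis
    proof (rule ccontr)
      assume "\<not> g dvd h"
      then have "h mod g \<noteq> 0" by (simp add: mod_eq_0_iff_dvd)
      then have "degree (h mod g) < degree g" using degree_mod_less g(2) by blast
      then show False using minl[OF hm \<open>h mod g \<noteq> 0\<close>] g(3) by simp
    qed
  qed
  obtain w where w: "g = [:0,1:] ^ order 0 g * w" "\<not> [:0,1:] dvd w"
    using order_decomp[OF g(2), of 0] by auto
  define k where "k = order 0 g"
  have w0: "w \<noteq> 0" using w(2) by auto
  have "dA r g \<in> T" using T g(1) unfolding closedT_def by blast
  then have gd: "g dvd dA r g" by (rule dvdT)
  have gw: "g = [:0,1:] ^ k * w" unfolding k_def by (rule w(1))
  have "[:0,1:] ^ k * w dvd [:0,1:] ^ k * (smult (of_nat k) ([:0,1:] ^ (r - 1)) * w + [:0,1:] ^ r * pderiv w)"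
    using gd unfolding gw D_apow[OF r] .
  then have "w dvd smult (of_nat k) ([:0,1:] ^ (r - 1)) * w + [:0,1:] ^ r * pderiv w"
    by (subst (asm) dvd_times_left_cancel_iff) simp_all
  moreover have "w dvd smult (of_nat k) ([:0,1:] ^ (r - 1)) * w" by (rule dvd_triv_right)
  ultimately have "w dvd [:0,1:] ^ r * pderiv w"
    using dvd_add_right_iff by blast
  then have "w dvd pderiv w" by (rule dvd_xpow_cancel[OF w(2)])
  then have "pderiv w = 0"
    by (metis degree_pderiv dvd_imp_degree_le diff_less less_numeral_extra(1) not_le pderiv_eq_0_iff not_gr0)
  then have "degree w = 0" by (simp add: pderiv_eq_0_iff)
  then obtain c where c: "w = [:c:]" by (metis degree_eq_zeroE)
  with w0 have c0: "c \<noteq> 0" by simp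
  have gk: "g = smult c ([:0,1:] ^ k)" using w(1) c unfolding k_def[symmetric] by simp
  have "T = Mm k"
  proof (intro set_eqI iffI)
    fix h assume "h \<in> T"
    then obtain q where "h = g * q" using dvdT by (auto elim: dvdE)
    then have "h = [:0,1:] ^ k * (smult c q)" using gk by simp
    then have "h = [:0,1:] ^ k * (smult c q)" by simp
    then show "h \<in> Mm k" unfolding Mm_def by (rule range_eqI)
  next
    fix h :: "'k poly" assume "h \<in> Mm k"
    then obtain q where "h = [:0,1:] ^ k * q" by (auto simp: Mm_def)
    then have "h = smult (inverse c) q * g" using gk c0 by (simp add: algebra_simps)
    then show "h \<in> T" using T g(1) unfolding closedT_def by metis
  qed
  then show ?thesis by blast
qed

lemma opow_ga: "opow r ga m = [:[:0,1:] ^ m:]"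
  by (induction m) (simp_all add: opow_def one_pCons omult_ga_const)

lemma qcoset0: "qcoset (lprinc r (gb - 1)) 0 = fib r 0"
  by (simp add: qcoset_fib)

lemma aN_eq: "qsmult r (lprinc r (gb - 1)) (opow r ga m) ` qcarrier (lprinc r (gb - 1)) = fib r ` Mm m"
proof -
  have "qsmult r (lprinc r (gb - 1)) (opow r ga m) ` qcarrier (lprinc r (gb - 1))
      = (\<lambda>g. fib r ([:0,1:] ^ m * g)) ` UNIV"
    by (simp add: qcarrier_fib opow_ga image_image qsmult_fib act_const)
  also have "\<dots> = fib r ` Mm m" by (simp add: Mm_def image_image)
  finally show ?thesis .
qed

lemma sub_Mm:
  assumes "r \<ge> 1"
  shows "qsubmodule r (lprinc r (gb - 1)) (fib r ` (Mm m :: 'k::field_char_0 poly set))"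
proof -
  have C: "closedT r (Mm m)" using closedT_Mm[OF assms] .
  show ?thesis
    unfolding qsubmodule_def
  proof (intro conjI ballI allI)
    show "fib r ` Mm m \<subseteq> qcarrier (lprinc r (gb - 1))" by (auto simp: qcarrier_fib)
    show "qcoset (lprinc r (gb - 1)) 0 \<in> fib r ` Mm m"
      using C by (auto simp: qcoset0 closedT_def)
  next
    fix X Y :: "'k poly poly set" assume "X \<in> fib r ` Mm m" "Y \<in> fib r ` Mm m"
    then show "qadd X Y \<in> fib r ` Mm m" using C by (auto simp: qadd_fib closedT_def)
  next
    fix c X assume "X \<in> fib r ` Mm m"
    then show "qsmult r (lprinc r (gb - 1)) c X \<in> fib r ` Mm m"
      using closedT_act[OF C] by (auto simp: qsmult_fib intro!: imageI)
  qed
qed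

lemma Mm_nonzero: "[:0,1:] ^ m \<in> Mm m"
  unfolding Mm_def by (rule range_eqI[of _ _ 1]) simp

lemma aN_nonzero: "fib r ` (Mm m :: 'k::field_char_0 poly set) \<noteq> {qcoset (lprinc r (gb - 1)) 0}"
proof
  assume "fib r ` (Mm m :: 'k poly set) = {qcoset (lprinc r (gb - 1 :: 'k poly poly)) 0}"
  moreover have "fib r ([:0,1:] ^ m :: 'k poly) \<in> fib r ` Mm m" using Mm_nonzero[of m] by (rule imageI)
  ultimately have "fib r ([:0,1:] ^ m :: 'k poly) \<in> {qcoset (lprinc r (gb - 1)) 0}" by (simp only:)
  then have "fib r ([:0,1:] ^ m :: 'k poly) = qcoset (lprinc r (gb - 1)) 0" by (rule singletonD)
  then have "fib r ([:0,1:] ^ m :: 'k poly) = fib r 0" by (simp only: qcoset0)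
  then show False by (simp add: fib_inj_iff)
qed

lemma fib_image_inj: "fib r ` A = fib r ` B \<longleftrightarrow> A = B"
proof (rule inj_image_eq_iff)
  show "inj (fib r)" by (rule injI) (rule fib_inj)
qed

lemma Mm_strict: "Mm (Suc m) \<subset> (Mm m :: 'k::field_char_0 poly set)"
proof
  show "Mm (Suc m) \<subseteq> (Mm m :: 'k poly set)"
  proof
    fix x :: "'k poly" assume "x \<in> Mm (Suc m)"
    then obtain h where "x = [:0,1:] ^ Suc m * h" unfolding Mm_def by blast
    moreover have "[:0,1:] ^ Suc m * h = [:0,1:] ^ m * ([:0,1:] * (h :: 'k poly))"
      by (simp only: power_Suc2 mult.assoc)
    ultimately have "x = [:0,1:] ^ m * ([:0,1:] * h)" by (rule trans)
    then show "x \<in> Mm m" unfolding Mm_def by (rule range_eqI)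
  qed
  show "Mm (Suc m) \<noteq> (Mm m :: 'k poly set)"
  proof
    assume "Mm (Suc m) = (Mm m :: 'k poly set)"
    moreover have "[:0,1:] ^ m \<in> (Mm m :: 'k poly set)" by (rule Mm_nonzero)
    ultimately have "[:0,1:] ^ m \<in> (Mm (Suc m) :: 'k poly set)" by (simp only:)
    then obtain h :: "'k poly" where h: "[:0,1:] ^ m = [:0,1:] ^ Suc m * h" unfolding Mm_def by blast
    have an: "[:0,1:] ^ n \<noteq> (0 :: 'k poly)" for n by simp
    have dg: "degree ([:0,1:] ^ n :: 'k poly) = n" for n using degree_linear_power[of 0 n] by simp
    have "h \<noteq> 0" using h an[of m] by (metis mult_zero_right)
    then have "degree ([:0,1:] ^ Suc m * h) = Suc m + degree h"
      using degree_mult_eq[OF an[of "Suc m"], of h] dg[of "Suc m"] by simp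
    moreover have "degree ([:0,1:] ^ m :: 'k poly) = m" by (rule dg)
    ultimately show False using arg_cong[OF h, of degree] by simp
  qed
qed

lemma aN_strict: "fib r ` Mm (Suc m) \<subset> fib r ` (Mm m :: 'k::field_char_0 poly set)"
proof -
  have "Mm (Suc m) \<subset> (Mm m :: 'k poly set)" by (rule Mm_strict)
  then have "fib r ` Mm (Suc m) \<subseteq> fib r ` (Mm m :: 'k poly set)" "Mm (Suc m) \<noteq> (Mm m :: 'k poly set)" by (auto intro: image_mono)
  then show ?thesis using fib_image_inj[of r "Mm (Suc m) :: 'k poly set" "Mm m"] by blast
qed

lemma sub_classify:
  fixes S :: "'k::field_char_0 poly poly set set"
  assumes r: "r \<ge> 1" and S: "qsubmodule r (lprinc r (gb - 1)) S" and nz: "S \<noteq> {qcoset (lprinc r (gb - 1)) 0}"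
  shows "\<exists>m. S = fib r ` Mm m"
proof -
  define T where "T = {g. fib r g \<in> S}"
  have Sfib: "S = fib r ` T"
    using S unfolding qsubmodule_def T_def by (auto simp: qcarrier_fib)
  have T0: "0 \<in> T" using S by (simp add: T_def qsubmodule_def qcoset0)
  have Tadd: "g + h \<in> T" if "g \<in> T" "h \<in> T" for g h
    using S that unfolding T_def qsubmodule_def by (metis mem_Collect_eq qadd_fib)
  have Tact: "act r c g \<in> T" if "g \<in> T" for c g
    using S that unfolding T_def qsubmodule_def by (metis mem_Collect_eq qsmult_fib)
  have Tmul: "p * g \<in> T" if "g \<in> T" for p g
    using Tact[OF that, of "[:p:]"] by (simp add: act_const)
  have TD: "dA r g \<in> T" if "g \<in> T" for g
  proof -
    have "E r g \<in> T" using Tact[OF that, of gb] by (simp add: act_gb)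
    then have "g + (-1) * E r g \<in> T" using Tadd Tmul that by blast
    then show ?thesis by (simp add: E_def)
  qed
  have C: "closedT r T" unfolding closedT_def using T0 Tadd Tmul TD by blast
  obtain g where "g \<in> T" "g \<noteq> 0"
  proof (rule ccontr)
    assume "\<not> thesis"
    then have "T = {0}" using T0 that by blast
    then show False using nz Sfib by (simp add: qcoset0)
  qed
  then obtain m where "T = Mm m" using ideal_classify[OF r C] by blast
  then show ?thesis using Sfib by blast
qed

lemma no_iso:
  fixes m n :: nat
  assumes r: "r \<ge> 1" and mn: "m \<noteq> n"
  shows "\<not> qiso r (lprinc r (gb - 1)) (fib r ` (Mm m :: 'k::field_char_0 poly set)) (fib r ` Mm n)"
proof
  let ?L = "lprinc r (gb - 1) :: 'k poly poly set"
  let ?a = "[:0,1:] :: 'k poly"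
  assume "qiso r ?L (fib r ` Mm m) (fib r ` Mm n)"
  then obtain f where bij: "bij_betw f (fib r ` Mm m) (fib r ` Mm n)"
    and lin: "\<And>c X. X \<in> fib r ` Mm m \<Longrightarrow> f (qsmult r ?L c X) = qsmult r ?L c (f X)"
    unfolding qiso_def by blast
  have am: "fib r (?a ^ m) \<in> fib r ` Mm m" using Mm_nonzero by blast
  then have "f (fib r (?a ^ m)) \<in> fib r ` Mm n" using bij by (rule bij_betw_apply[rotated])
  then obtain v where u: "f (fib r (?a ^ m)) = fib r (?a ^ n * v)" by (auto simp: Mm_def)
  define u where "u = ?a ^ n * v"
  have fp: "f (fib r (p * ?a ^ m)) = fib r (p * u)" for p
  proof -
    have "f (fib r (p * ?a ^ m)) = f (qsmult r ?L [:p:] (fib r (?a ^ m)))"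
      by (simp add: qsmult_fib act_const)
    also have "\<dots> = qsmult r ?L [:p:] (fib r u)" using lin[OF am] u by (simp add: u_def)
    also have "\<dots> = fib r (p * u)" by (simp add: qsmult_fib act_const)
    finally show ?thesis .
  qed
  have "fib r (?a ^ n) \<in> f ` (fib r ` Mm m)"
    using bij Mm_nonzero[of n] by (auto simp: bij_betw_def)
  then obtain h where "f (fib r (?a ^ m * h)) = fib r (?a ^ n)" by (auto simp: Mm_def)
  then have "fib r (h * u) = fib r (?a ^ n)" using fp[of h] by (simp add: mult.commute)
  then have "h * u = ?a ^ n" by (rule fib_inj)
  then have "?a ^ n * (h * v) = ?a ^ n * 1" by (simp add: u_def algebra_simps)
  then have hv: "h * v = 1" by (subst (asm) mult_left_cancel) simp_all
  then have "v \<noteq> 0" by auto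
  have "h \<noteq> 0" using hv by auto
  have "degree (h * v) = 0" using hv by simp
  then have "degree v = 0" using degree_mult_eq[OF \<open>h \<noteq> 0\<close> \<open>v \<noteq> 0\<close>] by simp
  then obtain lam where lam: "v = [:lam:]" by (metis degree_eq_zeroE)
  with \<open>v \<noteq> 0\<close> have lam0: "lam \<noteq> 0" by simp
  have Eam: "E r (?a ^ m) = (1 - smult (of_nat m) (?a ^ (r - 1))) * ?a ^ m"
  proof -
    have Dm: "dA r (?a ^ m) = ?a ^ m * smult (of_nat m) (?a ^ (r - 1))"
      using D_apow[OF r, of m 1] by simp
    show ?thesis unfolding E_def Dm by (simp add: algebra_simps)
  qed
  have "f (qsmult r ?L gb (fib r (?a ^ m))) = qsmult r ?L gb (fib r u)"
    using lin[OF am] u by (simp add: u_def)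
  then have "f (fib r (E r (?a ^ m))) = fib r (E r u)" by (simp add: qsmult_fib act_gb)
  then have "fib r ((1 - smult (of_nat m) (?a ^ (r - 1))) * u) = fib r (E r u)"
    using fp by (simp add: Eam)
  then have "(1 - smult (of_nat m) (?a ^ (r - 1))) * u = E r u" by (rule fib_inj)
  then have eq1: "dA r u = smult (of_nat m) (?a ^ (r - 1)) * u" by (simp add: E_def algebra_simps)
  have "dA r u = ?a ^ n * (smult (of_nat n) (?a ^ (r - 1)) * v)"
    using D_apow[OF r, of n v] lam by (simp add: u_def)
  then have "smult (of_nat n) (?a ^ (r - 1) * ?a ^ n * v) = smult (of_nat m) (?a ^ (r - 1) * ?a ^ n * v)"
    using eq1 by (simp add: u_def algebra_simps)
  then have "smult (of_nat n - of_nat m) (?a ^ (r - 1) * ?a ^ n * v) = 0"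
    by (simp add: smult_diff_left)
  moreover have "?a ^ (r - 1) * ?a ^ n * v \<noteq> 0" using lam0 lam by simp
  ultimately have "(of_nat n :: 'k) = of_nat m" by simp
  then show False using mn by simp
qed

theorem proposition3p5:
  fixes r :: nat and J L :: "'k::field_char_0 poly poly set" and x :: "'k poly poly"
    and aN :: "nat \<Rightarrow> 'k poly poly set set"
  assumes "r \<ge> 1"
  defines "J \<equiv> lprinc r (ga - 1)"
    and "x \<equiv> gb - 1"
    and "L \<equiv> lprinc r x"
    and "aN \<equiv> (\<lambda>m. qsmult r L (opow r ga m) ` qcarrier L)"
  shows "(maximal_left_ideal r J \<and> (\<forall>m c. omult r ((sigma r ^^ m) x) c - 1 \<notin> J))
       \<and> (\<not> qartinian r L
          \<and> (\<forall>S. (qsubmodule r L S \<and> S \<noteq> {qcoset L 0}) \<longleftrightarrow> (\<exists>m. S = aN m))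
          \<and> (\<forall>m. aN (Suc m) \<subset> aN m))
       \<and> (\<forall>m n. m \<noteq> n \<longrightarrow> \<not> qiso r L (aN m) (aN n))"
proof -
  have r: "r \<ge> 1" by (rule assms(1))
  have aNe: "aN m = fib r ` (Mm m :: 'k poly set)" for m
    unfolding aN_def L_def x_def by (rule aN_eq)
  have Le: "L = lprinc r (gb - 1)" unfolding L_def x_def ..
  have A1: "maximal_left_ideal r J" unfolding J_def by (rule J_maximal)
  have A2: "\<forall>m c. omult r ((sigma r ^^ m) x) c - 1 \<notin> J"
  proof (intro allI)
    fix m c show "omult r ((sigma r ^^ m) x) c - 1 \<notin> J"
      unfolding J_def x_def by (rule part_a2[OF r])
  qed
  have B3: "\<forall>m. aN (Suc m) \<subset> aN m"
  proof
    fix m show "aN (Suc m) \<subset> aN m" unfolding aNe by (rule aN_strict)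
  qed
  have subm: "qsubmodule r L (aN m)" for m
    unfolding aNe Le by (rule sub_Mm[OF r])
  have B1: "\<not> qartinian r L"
  proof
    assume "qartinian r L"
    then have "(\<forall>n. qsubmodule r L (aN n)) \<and> (\<forall>n. aN (Suc n) \<subseteq> aN n) \<longrightarrow> (\<exists>k. \<forall>n\<ge>k. aN n = aN k)"
      unfolding qartinian_def by (rule spec)
    moreover have "(\<forall>n. qsubmodule r L (aN n)) \<and> (\<forall>n. aN (Suc n) \<subseteq> aN n)"
    proof (intro conjI allI)
      fix n show "qsubmodule r L (aN n)" by (rule subm)
      show "aN (Suc n) \<subseteq> aN n" using spec[OF B3, of n] by (rule psubset_imp_subset)
    qed
    ultimately have "\<exists>k. \<forall>n\<ge>k. aN n = aN k" by (rule mp)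
    then obtain k where k: "\<forall>n\<ge>k. aN n = aN k" ..
    then have "aN (Suc k) = aN k" using le_SucI by blast
    moreover have "aN (Suc k) \<subset> aN k" using B3 by (rule spec)
    ultimately show False by (simp only: psubset_eq) (erule conjE, erule notE, rule refl)
  qed
  have B2: "\<forall>S. (qsubmodule r L S \<and> S \<noteq> {qcoset L 0}) \<longleftrightarrow> (\<exists>m. S = aN m)"
  proof (intro allI iffI)
    fix S assume H: "qsubmodule r L S \<and> S \<noteq> {qcoset L 0}"
    have H1: "qsubmodule r (lprinc r (gb - 1)) S" using conjunct1[OF H] unfolding Le .
    have H2: "S \<noteq> {qcoset (lprinc r (gb - 1)) 0}" using conjunct2[OF H] unfolding Le .
    obtain m where "S = fib r ` (Mm m :: 'k poly set)"
      using sub_classify[OF r H1 H2] ..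
    then show "\<exists>m. S = aN m" unfolding aNe by (rule exI)
  next
    fix S assume "\<exists>m. S = aN m"
    then obtain m where Sm: "S = aN m" ..
    show "qsubmodule r L S \<and> S \<noteq> {qcoset L 0}"
    proof
      show "qsubmodule r L S" unfolding Sm by (rule subm)
      show "S \<noteq> {qcoset L 0}" unfolding Sm aNe Le by (rule aN_nonzero)
    qed
  qed
  have C: "\<forall>m n. m \<noteq> n \<longrightarrow> \<not> qiso r L (aN m) (aN n)"
  proof (intro allI impI)
    fix m n :: nat assume "m \<noteq> n"
    then show "\<not> qiso r L (aN m) (aN n)" unfolding aNe Le by (rule no_iso[OF r])
  qed
  show ?thesis by (intro conjI A1 A2 B1 B2 B3 C)
qed

end
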